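(* For every $0\le\varepsilon\le1$, $$L^*_{\mathrm{avg}}(\varepsilon,X,Y)=\mathbb{E}\big[\langle\lfloor\log\varsigma_Y^{-1}(X)\rfloor\rangle_\varepsilon\big],$$ where $\varsigma_Y$ is a ($\sigma(Y)$-measurable) random permutation of $\mathcal X=\{1,2,\dots\}$ with $P_{X|Y}(\varsigma_Y(1)\mid Y)\ge P_{X|Y}(\varsigma_Y(2)\mid Y)\ge\cdots$ a.s.
   Context: $\mathcal{X}=\{1,2,\dots\}$, $\mathcal{Y}$ an arbitrary measurable space, $X$ an $\mathcal{X}$-valued and $Y$ a $\mathcal{Y}$-valued random variable; logarithms are base 2; $P_{X|Y}(x\mid Y)$ is a version of $\mathbb{P}\{X=x\mid Y\}$. Unconditional $\varepsilon$-cutoff of a real random variable $Z$: $\langle Z\rangle_\varepsilon := Z$ if $Z<\eta$, $:= BZ$ if $Z=\eta$, $:=0$ if $Z>\eta$, where $B$ is Bernoulli with $\mathbb{P}\{B=1\}=1-\beta$ independent of $Z$, and $\eta\in\mathbb{R}$ ($\eta=+\infty$ allowed when needed), $0\le\beta<1$ satisfy $\mathbb{P}\{Z>\eta\}+\beta\mathbb{P}\{Z=\eta\}=\varepsilon$. Codes (one-shot): $\{0,1\}^*$ is the set of finite binary strings including the empty string, $\ell$ the length function. A variable-length stochastic code is a pair of random (possibly randomized) maps $F:\mathcal X\times\mathcal Y\to\{0,1\}^*$, $G:\{0,1\}^*\times\mathcal Y\to\mathcal X$ such that $F(X,Y)$ and $G(F(X,Y),Y)$ are random variables. It is an $(L,\varepsilon)_{\mathrm{avg}}$-code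 if $\mathbb{E}[\ell(F(X,Y))]\le L$ and $\mathbb{P}\{X\ne G(F(X,Y),Y)\}\le\varepsilon$. $L^*_{\mathrm{avg}}(\varepsilon,X,Y):=\inf\{L>0:\text{an }(L,\varepsilon)_{\mathrm{avg}}\text{-code exists}\}$. *)

theory Defs
  imports "HOL-Probability.Probability"
begin

text \<open>Alphabet X = {1,2,...} is represented by the naturals \<open>\<ge> 1\<close>; binary strings are
  \<open>bool list\<close>.  A stochastic encoder is a kernel \<open>F x y\<close> (a pmf on strings),
  a stochastic decoder is a kernel \<open>G w y\<close> (a pmf on X).\<close>

definition cond_pmf :: "'a measure \<Rightarrow> ('a \<Rightarrow> nat) \<Rightarrow> ('a \<Rightarrow> 'b) \<Rightarrow> 'b measure \<Rightarrow> nat \<Rightarrow> 'a \<Rightarrow> real" where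
  "cond_pmf M X Y N x = real_cond_exp M (vimage_algebra (space M) Y N)
      (indicator {\<omega> \<in> space M. X \<omega> = x})"

definition avg_code :: "'a measure \<Rightarrow> ('a \<Rightarrow> nat) \<Rightarrow> ('a \<Rightarrow> 'b) \<Rightarrow> 'b measure \<Rightarrow> ennreal \<Rightarrow> real
    \<Rightarrow> (nat \<Rightarrow> 'b \<Rightarrow> bool list pmf) \<Rightarrow> (bool list \<Rightarrow> 'b \<Rightarrow> nat pmf) \<Rightarrow> bool" where
  "avg_code M X Y N L eps F G \<longleftrightarrow>
     (\<forall>x w. (\<lambda>y. pmf (F x y) w) \<in> borel_measurable N) \<and>
     (\<forall>w x. (\<lambda>y. pmf (G w y) x) \<in> borel_measurable N) \<and>
     (\<forall>w y. set_pmf (G w y) \<subseteq> {1..}) \<and>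
     (\<integral>\<^sup>+ \<omega>. (\<integral>\<^sup>+ w. ennreal (real (length w)) \<partial>measure_pmf (F (X \<omega>) (Y \<omega>))) \<partial>M) \<le> L \<and>
     (\<integral>\<^sup>+ \<omega>. ennreal (measure_pmf.prob (bind_pmf (F (X \<omega>) (Y \<omega>)) (\<lambda>w. G w (Y \<omega>)))
                                       (UNIV - {X \<omega>})) \<partial>M) \<le> ennreal eps"

text \<open>L*_avg(eps,X,Y); infimum of the empty set is \<open>\<infinity>\<close>.\<close>
definition L_avg_star :: "'a measure \<Rightarrow> ('a \<Rightarrow> nat) \<Rightarrow> ('a \<Rightarrow> 'b) \<Rightarrow> 'b measure \<Rightarrow> real \<Rightarrow> ennreal" where
  "L_avg_star M X Y N eps =
     Inf {ennreal L | L. L > 0 \<and> (\<exists>F G. avg_code M X Y N (ennreal L) eps F G)}"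

text \<open>The eps-cutoff with parameters eta, and coin value b (B = 1 iff b).\<close>
definition cutoff :: "ereal \<Rightarrow> real \<Rightarrow> bool \<Rightarrow> real" where
  "cutoff \<eta> z b = (if ereal z < \<eta> then z else if ereal z = \<eta> then (if b then z else 0) else 0)"

definition cutoff_params :: "'a measure \<Rightarrow> ('a \<Rightarrow> real) \<Rightarrow> real \<Rightarrow> ereal \<Rightarrow> real \<Rightarrow> bool" where
  "cutoff_params M Z eps \<eta> \<beta> \<longleftrightarrow> \<eta> \<noteq> -\<infinity> \<and> 0 \<le> \<beta> \<and> \<beta> < 1 \<and>
     measure M {\<omega> \<in> space M. ereal (Z \<omega>) > \<eta>} + \<beta> * measure M {\<omega> \<in> space M. ereal (Z \<omega>) = \<eta>} = eps"

text \<open>E[<Z>_eps], B Bernoulli with P{B=1} = 1 - beta, independent of Z (product space).\<close>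
definition cutoff_exp :: "'a measure \<Rightarrow> ('a \<Rightarrow> real) \<Rightarrow> ereal \<Rightarrow> real \<Rightarrow> ennreal" where
  "cutoff_exp M Z \<eta> \<beta> =
     (\<integral>\<^sup>+ p. ennreal (cutoff \<eta> (Z (fst p)) (snd p)) \<partial>(M \<Otimes>\<^sub>M measure_pmf (bernoulli_pmf (1 - \<beta>))))"

end

theory Submission
  imports Defs
begin

fun enc :: "nat \<Rightarrow> bool list" where
  "enc n = (if n \<le> 1 then [] else odd n # enc (n div 2))"

fun dec :: "bool list \<Rightarrow> nat" where
  "dec [] = 1" | "dec (b # w) = 2 * dec w + (if b then 1 else 0)"

declare enc.simps[simp del]

lemma enc_le1: "n \<le> 1 \<Longrightarrow> enc n = []"
  by (subst enc.simps) simp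

lemma enc_gt1: "n > 1 \<Longrightarrow> enc n = odd n # enc (n div 2)"
  by (subst enc.simps) simp

lemma dec_enc: "n \<ge> 1 \<Longrightarrow> dec (enc n) = n"
proof (induction n rule: less_induct)
  case (less n)
  show ?case
  proof (cases "n \<le> 1")
    case True then show ?thesis using less by (simp add: enc_le1)
  next
    case False
    then have "dec (enc (n div 2)) = n div 2" using less by simp
    then show ?thesis using False by (simp add: enc_gt1)
  qed
qed

lemma enc_len: "n \<ge> 1 \<Longrightarrow> 2 ^ length (enc n) \<le> n \<and> n < 2 ^ (length (enc n) + 1)"
proof (induction n rule: less_induct)
  case (less n)
  show ?case
  proof (cases "n \<le> 1")
    case True then show ?thesis using less by (simp add: enc_le1)
  next
    case False
    define l where "l = length (enc (n div 2))"
    have h: "2 ^ l \<le> n div 2" "n div 2 < 2 ^ (l + 1)" using less False unfolding l_def by auto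
    have "length (enc n) = Suc l" using False unfolding l_def by (simp add: enc_gt1)
    moreover have "2 ^ Suc l \<le> n" using h(1) by simp
    moreover have "n < 2 ^ (Suc l + 1)" using h(2) by simp
    ultimately show ?thesis by simp
  qed
qed

lemma enc_log: "n \<ge> 1 \<Longrightarrow> \<lfloor>log 2 (real n)\<rfloor> = int (length (enc n))"
proof -
  assume n: "n \<ge> 1"
  have a: "2 ^ length (enc n) \<le> n" "n < 2 ^ (length (enc n) + 1)" using enc_len[OF n] by auto
  show ?thesis using floor_log_nat_eq_if[of 2 "length (enc n)" n, OF a] by simp
qed

lemma floor_log_le_iff': "n \<ge> 1 \<Longrightarrow> \<lfloor>log 2 (real n)\<rfloor> \<le> int k \<longleftrightarrow> n < 2 ^ (k+1)"
proof -
  assume n: "n \<ge> 1"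
  have a: "2 ^ length (enc n) \<le> n" "n < 2 ^ (length (enc n) + 1)" using enc_len[OF n] by auto
  show ?thesis
  proof
    assume "\<lfloor>log 2 (real n)\<rfloor> \<le> int k"
    then have "length (enc n) \<le> k" using enc_log[OF n] by simp
    then have "(2::nat) ^ (length (enc n) + 1) \<le> 2 ^ (k+1)" by (intro power_increasing) auto
    with a(2) show "n < 2 ^ (k+1)" by (rule less_le_trans)
  next
    assume "n < 2 ^ (k+1)"
    then have "(2::nat) ^ length (enc n) < 2 ^ (k+1)" using a(1) by (rule le_less_trans[rotated])
    then have "length (enc n) < k + 1" by (rule power_less_imp_less_exp[rotated]) simp
    then show "\<lfloor>log 2 (real n)\<rfloor> \<le> int k" using enc_log[OF n] by simp
  qed
qed

lemma antitone_from1: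
  fixes p :: "nat \<Rightarrow> real"
  assumes "\<And>i. i \<ge> 1 \<Longrightarrow> p (Suc i) \<le> p i" "1 \<le> i" "i \<le> j"
  shows "p j \<le> p i"
  using assms(3)
proof (induction j rule: dec_induct)
  case base then show ?case by simp
next
  case (step j) then show ?case using assms(1)[of j] assms(2) by simp
qed

lemma rearr:
  fixes p b :: "nat \<Rightarrow> real"
  assumes anti: "\<And>i. i \<ge> 1 \<Longrightarrow> p (Suc i) \<le> p i" and p0: "\<And>i. 0 \<le> p i"
    and b0: "\<And>i. 0 \<le> b i" and b1: "\<And>i. b i \<le> 1"
    and bs: "(\<Sum>i\<in>{1..m}. b i) \<le> real n" and n1: "n \<ge> 1"
  shows "(\<Sum>i\<in>{1..m}. p i * b i) \<le> (\<Sum>i\<in>{1..n}. p i)"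
proof (cases "m \<le> n")
  case True
  have "(\<Sum>i\<in>{1..m}. p i * b i) \<le> (\<Sum>i\<in>{1..m}. p i)"
    by (intro sum_mono) (use p0 b1 in \<open>simp add: mult_left_le\<close>)
  also have "\<dots> \<le> (\<Sum>i\<in>{1..n}. p i)" using True by (intro sum_mono2) (auto simp: p0)
  finally show ?thesis .
next
  case False
  have split: "{1..m} = {1..n} \<union> {Suc n..m}" "{1..n} \<inter> {Suc n..m} = {}" using False n1 by auto
  have e1: "(\<Sum>i\<in>{1..m}. p i * b i) = (\<Sum>i\<in>{1..n}. p i * b i) + (\<Sum>i\<in>{Suc n..m}. p i * b i)"
    using split by (simp add: sum.union_disjoint)
  have e2: "(\<Sum>i\<in>{Suc n..m}. p i * b i) \<le> (\<Sum>i\<in>{Suc n..m}. p n * b i)"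
    using antitone_from1[where p=p, OF anti n1] b0 by (intro sum_mono mult_right_mono) auto
  have e3: "(\<Sum>i\<in>{Suc n..m}. p n * b i) = p n * (\<Sum>i\<in>{Suc n..m}. b i)" by (simp add: sum_distrib_left)
  have e4: "(\<Sum>i\<in>{Suc n..m}. b i) \<le> real n - (\<Sum>i\<in>{1..n}. b i)"
    using bs split by (simp add: sum.union_disjoint)
  have e5: "p n * (\<Sum>i\<in>{Suc n..m}. b i) \<le> p n * (real n - (\<Sum>i\<in>{1..n}. b i))"
    using e4 p0 by (rule mult_left_mono)
  have e6: "p n * (real n - (\<Sum>i\<in>{1..n}. b i)) = (\<Sum>i\<in>{1..n}. p n * (1 - b i))"
    by (simp add: sum_subtractf sum_distrib_left algebra_simps)
  have e7: "(\<Sum>i\<in>{1..n}. p n * (1 - b i)) \<le> (\<Sum>i\<in>{1..n}. p i * (1 - b i))"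
    using antitone_from1[where p=p, OF anti] b1 by (intro sum_mono mult_right_mono) auto
  have e8: "(\<Sum>i\<in>{1..n}. p i * b i) + (\<Sum>i\<in>{1..n}. p i * (1 - b i)) = (\<Sum>i\<in>{1..n}. p i)"
    by (simp add: sum.distrib[symmetric] algebra_simps)
  show ?thesis using e1 e2 e3 e5 e6 e7 e8 by linarith
qed


lemma rearr_sum:
  fixes s :: "nat \<Rightarrow> nat" and c a :: "nat \<Rightarrow> real"
  assumes bs: "bij_betw s {1..} {1..}" and anti: "\<And>i. i \<ge> 1 \<Longrightarrow> c (s (Suc i)) \<le> c (s i)"
    and c0: "\<And>x. 0 \<le> c x" and a0: "\<And>x. 0 \<le> a x" and a1: "\<And>x. a x \<le> 1" and az: "a 0 = 0"
    and as: "\<And>S. finite S \<Longrightarrow> (\<Sum>x\<in>S. a x) \<le> real n" and n1: "n \<ge> 1"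
  shows "(\<Sum>x. ennreal (c x * a x)) \<le> ennreal (\<Sum>i\<in>{1..n}. c (s i))"
proof (rule suminf_le_const[OF summableI])
  fix K
  define T where "T = inv_into {1..} s ` {1..<K}"
  define m where "m = Max (insert 1 T)"
  have fT: "finite T" unfolding T_def by simp
  have T1: "T \<subseteq> {1..m}"
  proof
    fix i assume "i \<in> T"
    then obtain x where x: "x \<in> {1..<K}" "i = inv_into {1..} s x" unfolding T_def by auto
    then have "x \<in> s ` {1..}" using bs by (auto simp: bij_betw_def)
    from inv_into_into[OF this] show "i \<in> {1..m}" using x(2) \<open>i \<in> T\<close> fT unfolding m_def by auto
  qed
  have sub: "{1..<K} \<subseteq> s ` {1..m}"
  proof
    fix x assume x: "x \<in> {1..<K}"
    then have "s (inv_into {1..} s x) = x" using bs by (auto intro!: bij_betw_inv_into_right)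
    moreover have "inv_into {1..} s x \<in> T" using x unfolding T_def by blast
    then have "inv_into {1..} s x \<in> {1..m}" using T1 by blast
    ultimately show "x \<in> s ` {1..m}" by force
  qed
  have inj: "inj_on s {1..m}" using bs unfolding bij_betw_def by (auto intro: inj_on_subset)
  have "(\<Sum>x<K. ennreal (c x * a x)) = (\<Sum>x\<in>{1..<K}. ennreal (c x * a x))"
  proof -
    have "{..<K} \<subseteq> insert 0 {1..<K}" by auto
    then have "(\<Sum>x<K. ennreal (c x * a x)) \<le> (\<Sum>x\<in>insert 0 {1..<K}. ennreal (c x * a x))"
      by (intro sum_mono2) auto
    also have "\<dots> = (\<Sum>x\<in>{1..<K}. ennreal (c x * a x))" by (simp add: az)
    finally have "(\<Sum>x<K. ennreal (c x * a x)) \<le> \<dots>" .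
    moreover have "(\<Sum>x\<in>{1..<K}. ennreal (c x * a x)) \<le> (\<Sum>x<K. ennreal (c x * a x))"
      by (intro sum_mono2) auto
    ultimately show ?thesis by (rule antisym)
  qed
  also have "\<dots> \<le> (\<Sum>x\<in>s ` {1..m}. ennreal (c x * a x))" using sub by (intro sum_mono2) auto
  also have "\<dots> = (\<Sum>i\<in>{1..m}. ennreal (c (s i) * a (s i)))" using inj by (simp add: sum.reindex)
  also have "\<dots> = ennreal (\<Sum>i\<in>{1..m}. c (s i) * a (s i))" using c0 a0 by (simp add: sum_nonneg)
  also have "\<dots> \<le> ennreal (\<Sum>i\<in>{1..n}. c (s i))"
  proof (intro ennreal_leI rearr[where p="\<lambda>i. c (s i)" and b="\<lambda>i. a (s i)"])
    show "(\<Sum>i\<in>{1..m}. a (s i)) \<le> real n"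
      using as[of "s ` {1..m}"] inj by (simp add: sum.reindex)
  qed (use anti c0 a0 a1 n1 in auto)
  finally show "(\<Sum>x<K. ennreal (c x * a x)) \<le> ennreal (\<Sum>i\<in>{1..n}. c (s i))" .
qed


locale L5 = prob_space M for M :: "'a measure" +
  fixes X :: "'a \<Rightarrow> nat" and Y :: "'a \<Rightarrow> 'b" and N :: "'b measure" and \<sigma> :: "'a \<Rightarrow> nat \<Rightarrow> nat"
  assumes Xm[measurable]: "X \<in> measurable M (count_space UNIV)" and Ym[measurable]: "Y \<in> measurable M N"
  and X1: "\<forall>\<omega>\<in>space M. X \<omega> \<ge> 1"
  and bij: "\<forall>\<omega>\<in>space M. bij_betw (\<sigma> \<omega>) {1..} {1..}"
  and \<sigma>m: "\<forall>i. (\<lambda>\<omega>. \<sigma> \<omega> i) \<in> measurable (vimage_algebra (space M) Y N) (count_space UNIV)"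
  and ord: "AE \<omega> in M. \<forall>i\<ge>1. cond_pmf M X Y N (\<sigma> \<omega> i) \<omega> \<ge> cond_pmf M X Y N (\<sigma> \<omega> (Suc i)) \<omega>"
begin

abbreviation "Fa \<equiv> vimage_algebra (space M) Y N"
abbreviation "cp x \<equiv> cond_pmf M X Y N x"

lemma subalg: "subalgebra M Fa"
proof -
  have "Y \<in> space M \<rightarrow> space N" using Ym by (auto simp: measurable_def)
  then have "sets Fa = {Y -` A \<inter> space M | A. A \<in> sets N}" by (rule sets_vimage_algebra2)
  then have "sets Fa \<subseteq> sets M" using Ym by (auto intro: measurable_sets)
  then show ?thesis unfolding subalgebra_def by simp
qed

lemma sfs: "sigma_finite_subalgebra M Fa"
  by (rule finite_measure_subalgebra_is_sigma_finite) (simp add: finite_measure_subalgebra_def finite_measure_subalgebra_axioms_def subalg finite_measure_axioms)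

lemma Fa_meas: "f \<in> borel_measurable Fa \<Longrightarrow> f \<in> borel_measurable M"
  using measurable_from_subalg[OF subalg] .

lemma cp_meas[measurable]: "cp x \<in> borel_measurable M"
  unfolding cond_pmf_def by simp

lemma cp_nonneg: "AE \<omega> in M. \<forall>x. 0 \<le> cp x \<omega>"
  unfolding AE_all_countable cond_pmf_def
  by (intro allI sigma_finite_subalgebra.real_cond_exp_pos[OF sfs]) auto

lemma tower:
  assumes am: "\<And>x. a x \<in> borel_measurable Fa" and a0: "\<And>x \<omega>. 0 \<le> a x \<omega>" and a1: "\<And>x \<omega>. a x \<omega> \<le> 1"
  shows "(\<integral>\<^sup>+\<omega>. ennreal (a (X \<omega>) \<omega>) \<partial>M) = (\<integral>\<^sup>+\<omega>. (\<Sum>x. ennreal (cp x \<omega> * a x \<omega>)) \<partial>M)"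
proof -
  have amM[measurable]: "a x \<in> borel_measurable M" for x using Fa_meas[OF am] .
  define I where "I x = {\<omega>\<in>space M. X \<omega> = x}" for x
  have I[measurable]: "I x \<in> sets M" for x unfolding I_def by measurable
  have step1: "ennreal (a (X \<omega>) \<omega>) = (\<Sum>x. ennreal (indicator (I x) \<omega> * a x \<omega>))" if "\<omega> \<in> space M" for \<omega>
    by (subst suminf_finite[of "{X \<omega>}"]) (auto simp: I_def that)
  have "(\<integral>\<^sup>+\<omega>. ennreal (a (X \<omega>) \<omega>) \<partial>M) = (\<integral>\<^sup>+\<omega>. (\<Sum>x. ennreal (indicator (I x) \<omega> * a x \<omega>)) \<partial>M)"
    by (intro nn_integral_cong step1)
  also have "\<dots> = (\<Sum>x. \<integral>\<^sup>+\<omega>. ennreal (indicator (I x) \<omega> * a x \<omega>) \<partial>M)"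
    by (intro nn_integral_suminf) measurable
  also have "\<dots> = (\<Sum>x. \<integral>\<^sup>+\<omega>. ennreal (cp x \<omega> * a x \<omega>) \<partial>M)"
  proof (intro suminf_cong)
    fix x
    have int1: "integrable M (\<lambda>\<omega>. a x \<omega> * indicator (I x) \<omega>)"
      by (intro integrable_const_bound[where B=1]) (auto simp: a0 a1 abs_le_iff indicator_def mult_le_one)
    note ce = sigma_finite_subalgebra.real_cond_exp_intg[OF sfs int1 am[of x]]
    have cpx: "cp x = real_cond_exp M Fa (indicator (I x))" unfolding cond_pmf_def I_def ..
    have "(\<integral>\<^sup>+\<omega>. ennreal (indicator (I x) \<omega> * a x \<omega>) \<partial>M) = ennreal (\<integral>\<omega>. a x \<omega> * indicator (I x) \<omega> \<partial>M)"
      by (subst nn_integral_eq_integral[symmetric]) (auto intro!: int1 nn_integral_cong simp: mult.commute a0)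
    also have "\<dots> = ennreal (\<integral>\<omega>. a x \<omega> * cp x \<omega> \<partial>M)" using ce(2) by (simp add: cpx)
    also have "\<dots> = (\<integral>\<^sup>+\<omega>. ennreal (a x \<omega> * cp x \<omega>) \<partial>M)"
    proof -
      have "AE \<omega> in M. 0 \<le> a x \<omega> * cp x \<omega>" using cp_nonneg by eventually_elim (simp add: a0)
      from nn_integral_eq_integral[OF ce(1)[folded cpx] this] show ?thesis by simp
    qed
    also have "\<dots> = (\<integral>\<^sup>+\<omega>. ennreal (cp x \<omega> * a x \<omega>) \<partial>M)" by (simp add: mult.commute)
    finally show "(\<integral>\<^sup>+\<omega>. ennreal (indicator (I x) \<omega> * a x \<omega>) \<partial>M) = (\<integral>\<^sup>+\<omega>. ennreal (cp x \<omega> * a x \<omega>) \<partial>M)" .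
  qed
  also have "\<dots> = (\<integral>\<^sup>+\<omega>. (\<Sum>x. ennreal (cp x \<omega> * a x \<omega>)) \<partial>M)"
    by (intro nn_integral_suminf[symmetric]) measurable
  finally show ?thesis .
qed

definition rank :: "'a \<Rightarrow> nat" where "rank \<omega> = inv_into {1..} (\<sigma> \<omega>) (X \<omega>)"

lemma rank_props: assumes "\<omega> \<in> space M" shows "rank \<omega> \<ge> 1" "\<sigma> \<omega> (rank \<omega>) = X \<omega>"
proof -
  have b: "bij_betw (\<sigma> \<omega>) {1..} {1..}" and x: "X \<omega> \<in> {1..}" using bij X1 assms by auto
  then have "X \<omega> \<in> \<sigma> \<omega> ` {1..}" by (simp add: bij_betw_def)
  from inv_into_into[OF this] show "rank \<omega> \<ge> 1" unfolding rank_def by simp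
  show "\<sigma> \<omega> (rank \<omega>) = X \<omega>" unfolding rank_def using bij_betw_inv_into_right[OF b x] .
qed

lemma rank_unique: assumes "\<omega> \<in> space M" "i \<ge> 1" "\<sigma> \<omega> i = X \<omega>" shows "i = rank \<omega>"
proof -
  have b: "bij_betw (\<sigma> \<omega>) {1..} {1..}" using bij assms by auto
  show ?thesis unfolding rank_def using bij_betw_inv_into_left[OF b, of i] assms by simp
qed

lemma rank_Least: "\<omega> \<in> space M \<Longrightarrow> rank \<omega> = (LEAST i. 1 \<le> i \<and> \<sigma> \<omega> i = X \<omega>)"
  by (rule Least_equality[symmetric]) (use rank_props rank_unique in \<open>auto\<close>)

lemma \<sigma>mM[measurable]: "(\<lambda>\<omega>. \<sigma> \<omega> i) \<in> measurable M (count_space UNIV)"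
  using measurable_from_subalg[OF subalg] \<sigma>m by blast

lemma \<sigma>mF: "(\<lambda>\<omega>. \<sigma> \<omega> i) \<in> measurable Fa (count_space UNIV)"
  using \<sigma>m by blast

lemma sX_sets[measurable]: "{\<omega>\<in>space M. \<sigma> \<omega> j = X \<omega>} \<in> sets M"
proof -
  have e: "{\<omega>\<in>space M. \<sigma> \<omega> j = X \<omega>} = (\<Union>x. ((\<lambda>\<omega>. \<sigma> \<omega> j) -` {x} \<inter> space M) \<inter> (X -` {x} \<inter> space M))" by auto
  show ?thesis unfolding e
    by (intro sets.countable_UN sets.Int measurable_sets[OF \<sigma>mM] measurable_sets[OF Xm]) auto
qed

lemma rank_meas[measurable]: "rank \<in> measurable M (count_space UNIV)"
  unfolding measurable_count_space_eq2_countable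
proof (intro conjI ballI)
  fix r :: nat
  show "rank -` {r} \<inter> space M \<in> sets M"
  proof (cases "r \<ge> 1")
    case True
    have "rank -` {r} \<inter> space M = {\<omega>\<in>space M. \<sigma> \<omega> r = X \<omega>}"
    proof (intro set_eqI iffI)
      fix \<omega> assume "\<omega> \<in> rank -` {r} \<inter> space M"
      then show "\<omega> \<in> {\<omega>\<in>space M. \<sigma> \<omega> r = X \<omega>}" using rank_props(2)[of \<omega>] by auto
    next
      fix \<omega> assume "\<omega> \<in> {\<omega>\<in>space M. \<sigma> \<omega> r = X \<omega>}"
      then show "\<omega> \<in> rank -` {r} \<inter> space M" using rank_unique[of \<omega> r] True by auto
    qed
    then show ?thesis using sX_sets by simp
  next
    case False
    then have "rank -` {r} \<inter> space M = {}" using rank_props(1) by fastforce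
    then show ?thesis by simp
  qed
qed simp

lemma cp_sigma: "(\<integral>\<^sup>+\<omega>. ennreal (cp (\<sigma> \<omega> i) \<omega>) \<partial>M) = emeasure M {\<omega>\<in>space M. \<sigma> \<omega> i = X \<omega>}"
proof -
  define a where "a x \<omega> = (if \<sigma> \<omega> i = x then 1 else 0::real)" for x \<omega>
  have am: "a x \<in> borel_measurable Fa" for x unfolding a_def using \<sigma>mF[of i] by measurable
  have "emeasure M {\<omega>\<in>space M. \<sigma> \<omega> i = X \<omega>} = (\<integral>\<^sup>+\<omega>. indicator {\<omega>\<in>space M. \<sigma> \<omega> i = X \<omega>} \<omega> \<partial>M)"
    by (rule nn_integral_indicator[symmetric, OF sX_sets])
  also have "\<dots> = (\<integral>\<^sup>+\<omega>. ennreal (a (X \<omega>) \<omega>) \<partial>M)"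
    by (rule nn_integral_cong) (simp add: a_def indicator_def)
  also have "\<dots> = (\<integral>\<^sup>+\<omega>. (\<Sum>x. ennreal (cp x \<omega> * a x \<omega>)) \<partial>M)"
    by (rule tower[OF am]) (auto simp: a_def)
  also have "\<dots> = (\<integral>\<^sup>+\<omega>. ennreal (cp (\<sigma> \<omega> i) \<omega>) \<partial>M)"
  proof (intro nn_integral_cong)
    fix \<omega> show "(\<Sum>x. ennreal (cp x \<omega> * a x \<omega>)) = ennreal (cp (\<sigma> \<omega> i) \<omega>)"
      by (subst suminf_finite[of "{\<sigma> \<omega> i}"]) (auto simp: a_def)
  qed
  finally show ?thesis ..
qed

lemma cp_sigma_meas[measurable]: "(\<lambda>\<omega>. cp (\<sigma> \<omega> i) \<omega>) \<in> borel_measurable M"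
  by (rule measurable_compose_countable[where f="\<lambda>x \<omega>. cp x \<omega>" and g="\<lambda>\<omega>. \<sigma> \<omega> i"]) simp_all

lemma sum_cp_sigma: "(\<integral>\<^sup>+\<omega>. (\<Sum>j\<in>{1..n}. ennreal (cp (\<sigma> \<omega> j) \<omega>)) \<partial>M) = emeasure M {\<omega>\<in>space M. rank \<omega> \<le> n}"
proof -
  have e: "{\<omega>\<in>space M. rank \<omega> \<le> n} = rank -` {..n} \<inter> space M" by auto
  have rm: "{\<omega>\<in>space M. rank \<omega> \<le> n} \<in> sets M"
    unfolding e by (rule measurable_sets[OF rank_meas]) simp
  have m1: "(\<lambda>\<omega>. ennreal (cp (\<sigma> \<omega> j) \<omega>)) \<in> borel_measurable M" for j
    using cp_sigma_meas[of j] by measurable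
  have m2: "indicator {\<omega>\<in>space M. \<sigma> \<omega> j = X \<omega>} \<in> borel_measurable M" for j
    using sX_sets[of j] by (rule borel_measurable_indicator)
  have "(\<integral>\<^sup>+\<omega>. (\<Sum>j\<in>{1..n}. ennreal (cp (\<sigma> \<omega> j) \<omega>)) \<partial>M) = (\<Sum>j\<in>{1..n}. \<integral>\<^sup>+\<omega>. ennreal (cp (\<sigma> \<omega> j) \<omega>) \<partial>M)"
    by (rule nn_integral_sum) (rule m1)
  also have "\<dots> = (\<Sum>j\<in>{1..n}. \<integral>\<^sup>+\<omega>. indicator {\<omega>\<in>space M. \<sigma> \<omega> j = X \<omega>} \<omega> \<partial>M)"
    by (intro sum.cong refl) (simp only: cp_sigma nn_integral_indicator[OF sX_sets])
  also have "\<dots> = (\<integral>\<^sup>+\<omega>. (\<Sum>j\<in>{1..n}. indicator {\<omega>\<in>space M. \<sigma> \<omega> j = X \<omega>} \<omega>) \<partial>M)"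
    by (rule nn_integral_sum[symmetric]) (rule m2)
  also have "\<dots> = (\<integral>\<^sup>+\<omega>. indicator {\<omega>\<in>space M. rank \<omega> \<le> n} \<omega> \<partial>M)"
  proof (intro nn_integral_cong)
    fix \<omega> assume w: "\<omega> \<in> space M"
    have "(\<Sum>j\<in>{1..n}. indicator {\<omega>\<in>space M. \<sigma> \<omega> j = X \<omega>} \<omega> :: ennreal)
        = (\<Sum>j\<in>{1..n}. if j = rank \<omega> then 1 else 0)"
    proof (intro sum.cong refl)
      fix j assume j: "j \<in> {1..n}"
      show "(indicator {\<omega>\<in>space M. \<sigma> \<omega> j = X \<omega>} \<omega> :: ennreal) = (if j = rank \<omega> then 1 else 0)"
      proof (cases "j = rank \<omega>")
        case True then show ?thesis using rank_props(2)[OF w] w by simp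
      next
        case False
        then have "\<sigma> \<omega> j \<noteq> X \<omega>" using rank_unique[OF w, of j] j by auto
        then show ?thesis using False by simp
      qed
    qed
    also have "\<dots> = (if rank \<omega> \<in> {1..n} then 1 else 0)" by (rule sum.delta) simp
    also have "\<dots> = indicator {\<omega>\<in>space M. rank \<omega> \<le> n} \<omega>"
      using rank_props(1)[OF w] w by (simp add: indicator_def)
    finally show "(\<Sum>j\<in>{1..n}. indicator {\<omega>\<in>space M. \<sigma> \<omega> j = X \<omega>} \<omega> :: ennreal) = indicator {\<omega>\<in>space M. rank \<omega> \<le> n} \<omega>" .
  qed
  also have "\<dots> = emeasure M {\<omega>\<in>space M. rank \<omega> \<le> n}" by (rule nn_integral_indicator[OF rm])
  finally show ?thesis .
qed

lemma converse_k:
  assumes am: "\<And>x. a x \<in> borel_measurable Fa" and a0: "\<And>x \<omega>. 0 \<le> a x \<omega>" and a1: "\<And>x \<omega>. a x \<omega> \<le> 1"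
    and az: "\<And>\<omega>. a 0 \<omega> = 0" and as: "\<And>\<omega> S. finite S \<Longrightarrow> (\<Sum>x\<in>S. a x \<omega>) \<le> real n" and n1: "n \<ge> 1"
  shows "(\<integral>\<^sup>+\<omega>. ennreal (a (X \<omega>) \<omega>) \<partial>M) \<le> emeasure M {\<omega>\<in>space M. rank \<omega> \<le> n}"
proof -
  have "(\<integral>\<^sup>+\<omega>. ennreal (a (X \<omega>) \<omega>) \<partial>M) = (\<integral>\<^sup>+\<omega>. (\<Sum>x. ennreal (cp x \<omega> * a x \<omega>)) \<partial>M)"
    by (rule tower[OF am a0 a1])
  also have "\<dots> \<le> (\<integral>\<^sup>+\<omega>. (\<Sum>j\<in>{1..n}. ennreal (cp (\<sigma> \<omega> j) \<omega>)) \<partial>M)"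
  proof (intro nn_integral_mono_AE)
    show "AE \<omega> in M. (\<Sum>x. ennreal (cp x \<omega> * a x \<omega>)) \<le> (\<Sum>j\<in>{1..n}. ennreal (cp (\<sigma> \<omega> j) \<omega>))"
      using ord cp_nonneg AE_space
    proof (eventually_elim)
      case (elim \<omega>)
      have "(\<Sum>x. ennreal (cp x \<omega> * a x \<omega>)) \<le> ennreal (\<Sum>j\<in>{1..n}. cp (\<sigma> \<omega> j) \<omega>)"
      proof (rule rearr_sum[where s="\<sigma> \<omega>" and c="\<lambda>x. cp x \<omega>" and a="\<lambda>x. a x \<omega>" and n=n])
        show "bij_betw (\<sigma> \<omega>) {1..} {1..}" using bij elim(3) by blast
        show "\<And>i. 1 \<le> i \<Longrightarrow> cp (\<sigma> \<omega> (Suc i)) \<omega> \<le> cp (\<sigma> \<omega> i) \<omega>" using elim(1) by blast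
        show "\<And>x. 0 \<le> cp x \<omega>" using elim(2) by blast
        show "\<And>S. finite S \<Longrightarrow> (\<Sum>x\<in>S. a x \<omega>) \<le> real n" by (rule as)
      qed (rule a0 a1 az n1)+
      also have "\<dots> = (\<Sum>j\<in>{1..n}. ennreal (cp (\<sigma> \<omega> j) \<omega>))"
        using elim(2) by (intro sum_ennreal[symmetric]) blast
      finally show ?case .
    qed
  qed
  also have "\<dots> = emeasure M {\<omega>\<in>space M. rank \<omega> \<le> n}" by (rule sum_cp_sigma)
  finally show ?thesis .
qed

end

context L5 begin

definition zn :: "'a \<Rightarrow> nat" where "zn \<omega> = length (enc (rank \<omega>))"

definition Zr :: "'a \<Rightarrow> real" where
  "Zr \<omega> = real_of_int \<lfloor>log 2 (real (inv_into {1..} (\<sigma> \<omega>) (X \<omega>)))\<rfloor>"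

lemma Zr_zn: "\<omega> \<in> space M \<Longrightarrow> Zr \<omega> = real (zn \<omega>)"
  unfolding Zr_def zn_def rank_def[symmetric] using enc_log[OF rank_props(1)] by simp

lemma zn_meas[measurable]: "zn \<in> measurable M (count_space UNIV)"
  unfolding zn_def by (rule measurable_compose[OF rank_meas]) simp

lemma zn_sets[measurable]: "{\<omega>\<in>space M. P (zn \<omega>)} \<in> sets M"
proof -
  have "{\<omega>\<in>space M. P (zn \<omega>)} = zn -` {n. P n} \<inter> space M" by auto
  then show ?thesis using measurable_sets[OF zn_meas, of "{n. P n}"] by simp
qed

lemma zn_le_iff: "\<omega> \<in> space M \<Longrightarrow> zn \<omega> \<le> k \<longleftrightarrow> rank \<omega> \<le> 2^(k+1) - 1"
proof -
  assume w: "\<omega> \<in> space M"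
  have "zn \<omega> \<le> k \<longleftrightarrow> \<lfloor>log 2 (real (rank \<omega>))\<rfloor> \<le> int k"
    unfolding zn_def using enc_log[OF rank_props(1)[OF w]] by simp
  also have "\<dots> \<longleftrightarrow> rank \<omega> < 2^(k+1)" by (rule floor_log_le_iff'[OF rank_props(1)[OF w]])
  also have "\<dots> \<longleftrightarrow> rank \<omega> \<le> 2^(k+1) - 1"
  proof -
    have "(1::nat) \<le> 2^(k+1)" by simp
    then show ?thesis by linarith
  qed
  finally show ?thesis .
qed

end

locale L5c = L5 +
  fixes eps :: real and \<eta> :: ereal and \<beta> :: real
  assumes eps0: "0 \<le> eps" and eps1: "eps \<le> 1"
  and cpar: "cutoff_params M Zr eps \<eta> \<beta>"
begin

lemma eta_ninf: "\<eta> \<noteq> -\<infinity>" and beta0: "0 \<le> \<beta>" and beta1: "\<beta> < 1"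
  and eps_eq: "prob {\<omega>\<in>space M. ereal (Zr \<omega>) > \<eta>} + \<beta> * prob {\<omega>\<in>space M. ereal (Zr \<omega>) = \<eta>} = eps"
  using cpar unfolding cutoff_params_def by auto

lemma em_fin: "emeasure M A < \<infinity>"
  using emeasure_finite[of A] by (simp add: less_top[symmetric])

definition Sgt where "Sgt = {\<omega>\<in>space M. ereal (real (zn \<omega>)) > \<eta>}"
definition Seq where "Seq = {\<omega>\<in>space M. ereal (real (zn \<omega>)) = \<eta>}"

lemma Sgt_sets[measurable]: "Sgt \<in> sets M" unfolding Sgt_def by (rule zn_sets)
lemma Seq_sets[measurable]: "Seq \<in> sets M" unfolding Seq_def by (rule zn_sets)

lemma eps_eq': "prob Sgt + \<beta> * prob Seq = eps"
proof -
  have "{\<omega>\<in>space M. ereal (Zr \<omega>) > \<eta>} = Sgt" "{\<omega>\<in>space M. ereal (Zr \<omega>) = \<eta>} = Seq"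
    unfolding Sgt_def Seq_def using Zr_zn by auto
  then show ?thesis using eps_eq by simp
qed

definition gw :: "'a \<Rightarrow> real" where "gw \<omega> = indicator Sgt \<omega> + \<beta> * indicator Seq \<omega>"

definition cw :: "'a \<Rightarrow> real" where
  "cw \<omega> = (if ereal (real (zn \<omega>)) < \<eta> then 1 else if ereal (real (zn \<omega>)) = \<eta> then 1 - \<beta> else 0)"

lemma cw_nonneg: "0 \<le> cw \<omega>" unfolding cw_def using beta1 by auto

lemma cw_gw: "\<omega> \<in> space M \<Longrightarrow> cw \<omega> = 1 - gw \<omega>"
  unfolding cw_def gw_def Sgt_def Seq_def by (auto simp: indicator_def not_less)

lemma gw_int: "integrable M gw" "(\<integral>\<omega>. gw \<omega> \<partial>M) = eps"
proof -
  have i1: "integrable M (indicator Sgt :: 'a \<Rightarrow> real)" by (intro integrable_real_indicator Sgt_sets em_fin)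
  have i2: "integrable M (\<lambda>\<omega>. \<beta> * indicator Seq \<omega> :: real)" by (intro integrable_mult_right integrable_real_indicator Seq_sets em_fin)
  show "integrable M gw" unfolding gw_def using i1 i2 by (rule Bochner_Integration.integrable_add)
  have "(\<integral>\<omega>. gw \<omega> \<partial>M) = (\<integral>\<omega>. indicator Sgt \<omega> \<partial>M) + (\<integral>\<omega>. \<beta> * indicator Seq \<omega> \<partial>M)"
    unfolding gw_def using i1 i2 by (rule Bochner_Integration.integral_add)
  also have "\<dots> = prob Sgt + \<beta> * prob Seq"
    by (simp only: integral_mult_right_zero Bochner_Integration.integral_indicator Int_absorb2[OF sets.sets_into_space[OF Sgt_sets]] Int_absorb2[OF sets.sets_into_space[OF Seq_sets]])
  finally have "(\<integral>\<omega>. gw \<omega> \<partial>M) = prob Sgt + \<beta> * prob Seq" .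
  then show "(\<integral>\<omega>. gw \<omega> \<partial>M) = eps" using eps_eq' by simp
qed

lemma cw_term:
  "(\<integral>\<^sup>+\<omega>. ennreal (indicator {\<omega>\<in>space M. k < zn \<omega>} \<omega> * cw \<omega>) \<partial>M) = ennreal (prob {\<omega>\<in>space M. k < zn \<omega>} - eps)"
proof (cases "ereal (real k) < \<eta>")
  case True
  have pw: "indicator {\<omega>\<in>space M. k < zn \<omega>} \<omega> * cw \<omega> = indicator {\<omega>\<in>space M. k < zn \<omega>} \<omega> - gw \<omega>"
    if w: "\<omega> \<in> space M" for \<omega>
  proof (cases "k < zn \<omega>")
    case True
    then have "indicator {\<omega>\<in>space M. k < zn \<omega>} \<omega> = (1::real)" using w by simp
    then show ?thesis using cw_gw[OF w] by simp
  next
    case False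
    then have "ereal (real (zn \<omega>)) \<le> ereal (real k)" by simp
    then have lt: "ereal (real (zn \<omega>)) < \<eta>" using \<open>ereal (real k) < \<eta>\<close> by (rule le_less_trans)
    then have "\<omega> \<notin> Sgt" "\<omega> \<notin> Seq" unfolding Sgt_def Seq_def by auto
    then have "gw \<omega> = 0" unfolding gw_def by simp
    moreover have "indicator {\<omega>\<in>space M. k < zn \<omega>} \<omega> = (0::real)" using False by simp
    ultimately show ?thesis by simp
  qed
  have int1: "integrable M (indicator {\<omega>\<in>space M. k < zn \<omega>} :: 'a \<Rightarrow> real)"
    by (intro integrable_real_indicator zn_sets em_fin)
  have "(\<integral>\<^sup>+\<omega>. ennreal (indicator {\<omega>\<in>space M. k < zn \<omega>} \<omega> * cw \<omega>) \<partial>M)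
      = (\<integral>\<^sup>+\<omega>. ennreal (indicator {\<omega>\<in>space M. k < zn \<omega>} \<omega> - gw \<omega>) \<partial>M)"
    by (intro nn_integral_cong) (simp only: pw)
  also have "\<dots> = ennreal (\<integral>\<omega>. indicator {\<omega>\<in>space M. k < zn \<omega>} \<omega> - gw \<omega> \<partial>M)"
  proof (rule nn_integral_eq_integral)
    show "integrable M (\<lambda>\<omega>. indicator {\<omega>\<in>space M. k < zn \<omega>} \<omega> - gw \<omega>)"
      using int1 gw_int(1) by (rule Bochner_Integration.integrable_diff)
    show "AE \<omega> in M. 0 \<le> indicator {\<omega>\<in>space M. k < zn \<omega>} \<omega> - gw \<omega>"
    proof (rule AE_I2)
      fix \<omega> assume w: "\<omega> \<in> space M"
      have "0 \<le> indicator {\<omega>\<in>space M. k < zn \<omega>} \<omega> * cw \<omega>"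
        using cw_nonneg[of \<omega>] by simp
      then show "0 \<le> indicator {\<omega>\<in>space M. k < zn \<omega>} \<omega> - gw \<omega>" using pw[OF w] by simp
    qed
  qed
  also have "(\<integral>\<omega>. indicator {\<omega>\<in>space M. k < zn \<omega>} \<omega> - gw \<omega> \<partial>M) = (\<integral>\<omega>. indicator {\<omega>\<in>space M. k < zn \<omega>} \<omega> \<partial>M) - (\<integral>\<omega>. gw \<omega> \<partial>M)"
    by (rule Bochner_Integration.integral_diff[OF int1 gw_int(1)])
  also have "\<dots> = prob {\<omega>\<in>space M. k < zn \<omega>} - eps"
    by (simp only: gw_int(2) Bochner_Integration.integral_indicator Int_absorb2[OF sets.sets_into_space[OF zn_sets]])
  finally show ?thesis .
next
  case False
  then have ek: "\<eta> \<le> ereal (real k)" by simp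
  have pw: "indicator {\<omega>\<in>space M. k < zn \<omega>} \<omega> * cw \<omega> = 0" for \<omega>
  proof (cases "k < zn \<omega>")
    case True
    then have "ereal (real k) < ereal (real (zn \<omega>))" by simp
    with ek have "\<eta> < ereal (real (zn \<omega>))" by (rule le_less_trans)
    then have "cw \<omega> = 0" unfolding cw_def by auto
    then show ?thesis by simp
  qed simp
  have "{\<omega>\<in>space M. k < zn \<omega>} \<subseteq> Sgt"
  proof
    fix \<omega> assume w: "\<omega> \<in> {\<omega>\<in>space M. k < zn \<omega>}"
    then have "ereal (real k) < ereal (real (zn \<omega>))" by simp
    with ek have "\<eta> < ereal (real (zn \<omega>))" by (rule le_less_trans)
    then show "\<omega> \<in> Sgt" unfolding Sgt_def using w by simp
  qed
  then have "prob {\<omega>\<in>space M. k < zn \<omega>} \<le> prob Sgt" by (intro finite_measure_mono Sgt_sets)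
  also have "\<dots> \<le> eps"
  proof -
    have "0 \<le> \<beta> * prob Seq" using beta0 by simp
    then show ?thesis using eps_eq' by linarith
  qed
  finally have "prob {\<omega>\<in>space M. k < zn \<omega>} - eps \<le> 0" by simp
  then have "ennreal (prob {\<omega>\<in>space M. k < zn \<omega>} - eps) = 0" by (rule ennreal_neg)
  then show ?thesis by (simp add: pw)
qed

definition LB where "LB = (\<Sum>k. ennreal (prob {\<omega>\<in>space M. k < zn \<omega>} - eps))"


lemma int_zn_cw: "(\<integral>\<^sup>+\<omega>. ennreal (real (zn \<omega>) * cw \<omega>) \<partial>M) = LB"
proof -
  have pw: "ennreal (real (zn \<omega>) * cw \<omega>) = (\<Sum>k. ennreal (indicator {\<omega>\<in>space M. k < zn \<omega>} \<omega> * cw \<omega>))"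
    if w: "\<omega> \<in> space M" for \<omega>
  proof -
    have "(\<Sum>k. ennreal (indicator {\<omega>\<in>space M. k < zn \<omega>} \<omega> * cw \<omega>)) = (\<Sum>k<zn \<omega>. ennreal (indicator {\<omega>\<in>space M. k < zn \<omega>} \<omega> * cw \<omega>))"
      by (rule suminf_finite) (auto simp: indicator_def)
    also have "\<dots> = (\<Sum>k<zn \<omega>. ennreal (cw \<omega>))" using w by (intro sum.cong) auto
    also have "\<dots> = ennreal (real (zn \<omega>) * cw \<omega>)" using cw_nonneg by (simp add: ennreal_mult' ennreal_of_nat_eq_real_of_nat mult.commute)
    finally show ?thesis ..
  qed
  have meas: "(\<lambda>\<omega>. ennreal (indicator {\<omega>\<in>space M. k < zn \<omega>} \<omega> * cw \<omega>)) \<in> borel_measurable M" for k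
  proof -
    define H where "H n = ennreal ((if k < n then 1 else 0) * (if ereal (real n) < \<eta> then 1 else if ereal (real n) = \<eta> then 1 - \<beta> else 0))" for n
    have "(\<lambda>\<omega>. H (zn \<omega>)) \<in> borel_measurable M" by (rule measurable_compose[OF zn_meas]) simp
    moreover have "\<And>\<omega>. \<omega> \<in> space M \<Longrightarrow> ennreal (indicator {\<omega>\<in>space M. k < zn \<omega>} \<omega> * cw \<omega>) = H (zn \<omega>)"
      by (simp add: H_def cw_def indicator_def)
    ultimately show ?thesis by (subst measurable_cong) auto
  qed
  have "(\<integral>\<^sup>+\<omega>. ennreal (real (zn \<omega>) * cw \<omega>) \<partial>M) = (\<integral>\<^sup>+\<omega>. (\<Sum>k. ennreal (indicator {\<omega>\<in>space M. k < zn \<omega>} \<omega> * cw \<omega>)) \<partial>M)"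
    by (intro nn_integral_cong pw)
  also have "\<dots> = (\<Sum>k. \<integral>\<^sup>+\<omega>. ennreal (indicator {\<omega>\<in>space M. k < zn \<omega>} \<omega> * cw \<omega>) \<partial>M)"
    by (rule nn_integral_suminf) (rule meas)
  also have "\<dots> = LB" unfolding LB_def by (intro suminf_cong cw_term)
  finally show ?thesis .
qed

end

context L5c begin

abbreviation "Bm \<equiv> measure_pmf (bernoulli_pmf (1 - \<beta>))"

lemma inner_cut: assumes w: "\<omega> \<in> space M"
  shows "(\<integral>\<^sup>+b. ennreal (cutoff \<eta> (Zr \<omega>) b) \<partial>Bm) = ennreal (real (zn \<omega>) * cw \<omega>)"
proof -
  define z where "z = real (zn \<omega>)"
  have Z: "Zr \<omega> = z" unfolding z_def using Zr_zn[OF w] .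
  have z0: "0 \<le> z" unfolding z_def by simp
  have p0: "0 \<le> 1 - \<beta>" "1 - \<beta> \<le> 1" using beta0 beta1 by auto
  have "(\<integral>\<^sup>+b. ennreal (cutoff \<eta> z b) \<partial>Bm) = ennreal (cutoff \<eta> z True) * ennreal (1 - \<beta>) + ennreal (cutoff \<eta> z False) * ennreal (1 - (1 - \<beta>))"
    by (rule nn_integral_bernoulli_pmf[OF p0]) simp
  also have "\<dots> = ennreal (z * cw \<omega>)"
  proof (cases "ereal z < \<eta>")
    case True
    then have "cw \<omega> = 1" unfolding cw_def z_def by simp
    moreover have "ennreal z * ennreal (1 - \<beta>) + ennreal z * ennreal \<beta> = ennreal z"
    proof -
      have "ennreal z * ennreal (1 - \<beta>) + ennreal z * ennreal \<beta> = ennreal (z * (1 - \<beta>)) + ennreal (z * \<beta>)"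
        using beta0 beta1 by (simp add: ennreal_mult''[symmetric])
      also have "\<dots> = ennreal (z * (1 - \<beta>) + z * \<beta>)"
        using beta0 beta1 z0 by (intro ennreal_plus[symmetric]) auto
      also have "z * (1 - \<beta>) + z * \<beta> = z" by (simp add: algebra_simps)
      finally show ?thesis .
    qed
    ultimately show ?thesis using True by (simp add: cutoff_def)
  next
    case False
    show ?thesis
    proof (cases "ereal z = \<eta>")
      case True
      then have "cw \<omega> = 1 - \<beta>" unfolding cw_def z_def by simp
      moreover have "ennreal z * ennreal (1 - \<beta>) = ennreal (z * (1 - \<beta>))" by (rule ennreal_mult'[OF z0, symmetric])
      ultimately show ?thesis using True by (simp add: cutoff_def)
    next
      case F2: False
      then have "cw \<omega> = 0" using False unfolding cw_def z_def by simp
      then show ?thesis using False F2 by (simp add: cutoff_def)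
    qed
  qed
  finally show ?thesis unfolding Z z_def .
qed

lemma cutoff_exp_eq: "cutoff_exp M Zr \<eta> \<beta> = (\<integral>\<^sup>+\<omega>. ennreal (real (zn \<omega>) * cw \<omega>) \<partial>M)"
proof -
  have sfB: "sigma_finite_measure Bm" by (rule prob_space_imp_sigma_finite) (rule prob_space_measure_pmf)
  define Hc where "Hc r b = ennreal (cutoff \<eta> (real_of_int \<lfloor>log 2 (real r)\<rfloor>) b)" for r b
  have Zh: "(\<lambda>p. ennreal (cutoff \<eta> (Zr (fst p)) (snd p))) = (\<lambda>p. Hc (rank (fst p)) (snd p))"
    unfolding Hc_def Zr_def rank_def by simp
  have meas: "(\<lambda>p. Hc (rank (fst p)) (snd p)) \<in> borel_measurable (M \<Otimes>\<^sub>M Bm)"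
  proof (rule measurable_compose_countable[where f="\<lambda>r p. Hc r (snd p)" and g="\<lambda>p. rank (fst p)"])
    fix r
    show "(\<lambda>p. Hc r (snd p)) \<in> borel_measurable (M \<Otimes>\<^sub>M Bm)"
      by (rule measurable_compose[OF measurable_snd]) simp
    show "(\<lambda>p. rank (fst p)) \<in> measurable (M \<Otimes>\<^sub>M Bm) (count_space UNIV)"
      by (rule measurable_compose[OF measurable_fst rank_meas])
  qed
  have "cutoff_exp M Zr \<eta> \<beta> = integral\<^sup>N (M \<Otimes>\<^sub>M Bm) (\<lambda>p. ennreal (cutoff \<eta> (Zr (fst p)) (snd p)))"
    unfolding cutoff_exp_def ..
  also have "\<dots> = (\<integral>\<^sup>+\<omega>. \<integral>\<^sup>+b. ennreal (cutoff \<eta> (Zr \<omega>) b) \<partial>Bm \<partial>M)"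
    using sigma_finite_measure.nn_integral_fst[OF sfB, of "\<lambda>p. ennreal (cutoff \<eta> (Zr (fst p)) (snd p))" M] meas unfolding Zh by simp
  also have "\<dots> = (\<integral>\<^sup>+\<omega>. ennreal (real (zn \<omega>) * cw \<omega>) \<partial>M)"
    by (intro nn_integral_cong inner_cut)
  finally show ?thesis .
qed

end

lemma meas_cs:
  fixes h :: "'b \<Rightarrow> 'c::countable \<Rightarrow> ennreal"
  assumes hm: "\<And>w. (\<lambda>y. h y w) \<in> borel_measurable N"
  shows "(\<lambda>y. \<integral>\<^sup>+w. h y w \<partial>count_space UNIV) \<in> borel_measurable N"
proof -
  have sf: "sigma_finite_measure (count_space (UNIV::'c set))"
    by (rule sigma_finite_measure_count_space_countable) simp
  have "(\<lambda>p. (\<lambda>w p. h (fst p) w) (snd p) p) \<in> borel_measurable (N \<Otimes>\<^sub>M count_space UNIV)"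
  proof (rule measurable_compose_countable[where g=snd])
    fix w :: 'c
    show "(\<lambda>p. h (fst p) w) \<in> borel_measurable (N \<Otimes>\<^sub>M count_space UNIV)"
      by (rule measurable_compose[OF measurable_fst hm])
  qed (rule measurable_snd)
  then have "case_prod h \<in> borel_measurable (N \<Otimes>\<^sub>M count_space UNIV)"
    by (simp add: case_prod_beta')
  then show ?thesis by (rule sigma_finite_measure.borel_measurable_nn_integral[OF sf])
qed

lemma sum_pow2: "(\<Sum>i\<le>k. (2::nat)^i) + 1 = 2^(k+1)"
  by (induction k) auto

lemma card_W: "card {w::bool list. length w \<le> k} = 2^(k+1) - 1"
proof -
  have "{w::bool list. length w \<le> k} = {xs. set xs \<subseteq> UNIV \<and> length xs \<le> k}" by auto
  then have "card {w::bool list. length w \<le> k} = (\<Sum>i\<le>k. card (UNIV::bool set)^i)"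
    using card_lists_length_le[of "UNIV::bool set" k] by simp
  also have "\<dots> = (\<Sum>i\<le>k. 2^i)" by simp
  finally show ?thesis using sum_pow2[of k] by simp
qed

lemma fin_W: "finite {w::bool list. length w \<le> k}"
proof -
  have "{w::bool list. length w \<le> k} = {xs. set xs \<subseteq> UNIV \<and> length xs \<le> k}" by auto
  then show ?thesis using finite_lists_length_le[of "UNIV::bool set" k] by simp
qed

lemma sum_pmf_le1: "finite S \<Longrightarrow> (\<Sum>x\<in>S. pmf p x) \<le> 1"
  using measure_measure_pmf_finite[of S p] measure_pmf.prob_le_1[of p S] by simp

context L5 begin

lemma XY_meas:
  assumes "\<And>x. f x \<in> measurable N K"
  shows "(\<lambda>\<omega>. f (X \<omega>) (Y \<omega>)) \<in> measurable M K"
proof (rule measurable_compose_countable[where f="\<lambda>x \<omega>. f x (Y \<omega>)" and g=X])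
  fix x show "(\<lambda>\<omega>. f x (Y \<omega>)) \<in> measurable M K" by (rule measurable_compose[OF Ym assms])
qed (rule Xm)

lemma Y_Fa:
  assumes "g \<in> measurable N K"
  shows "(\<lambda>\<omega>. g (Y \<omega>)) \<in> measurable Fa K"
proof -
  have "Y \<in> space M \<rightarrow> space N" using Ym by (auto simp: measurable_def)
  then have "Y \<in> measurable Fa N" by (rule measurable_vimage_algebra1)
  then show ?thesis using assms by (rule measurable_compose)
qed

end


context L5c begin

lemma code_lower:
  assumes ac: "avg_code M X Y N L eps F G"
  shows "LB \<le> L"
proof -
  from ac have Fm: "\<And>x w. (\<lambda>y. pmf (F x y) w) \<in> borel_measurable N"
    and Gm: "\<And>w x. (\<lambda>y. pmf (G w y) x) \<in> borel_measurable N"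
    and Lb: "(\<integral>\<^sup>+\<omega>. (\<integral>\<^sup>+w. ennreal (real (length w)) \<partial>measure_pmf (F (X \<omega>) (Y \<omega>))) \<partial>M) \<le> L"
    and Eb: "(\<integral>\<^sup>+\<omega>. ennreal (measure_pmf.prob (bind_pmf (F (X \<omega>) (Y \<omega>)) (\<lambda>w. G w (Y \<omega>))) (UNIV - {X \<omega>})) \<partial>M) \<le> ennreal eps"
    unfolding avg_code_def by auto
  define W where "W k = {w::bool list. length w \<le> k}" for k
  define PQ where "PQ x y w = pmf (F x y) w * pmf (G w y) x" for x y w
  define aY where "aY k x y = (\<Sum>w\<in>W k. PQ x y w)" for k x y
  define a where "a k x \<omega> = (if x = 0 then 0 else aY k x (Y \<omega>))" for k x \<omega>
  define D where "D k x y = (\<integral>\<^sup>+ w. indicator (- W k) w * ennreal (PQ x y w) \<partial>count_space UNIV)" for k x y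
  define q where "q x y = ennreal (pmf (bind_pmf (F x y) (\<lambda>w. G w y)) x)" for x y
  define e where "e x y = measure_pmf.prob (bind_pmf (F x y) (\<lambda>w. G w y)) (UNIV - {x})" for x y
  have finW: "finite (W k)" for k unfolding W_def by (rule fin_W)
  have PQ0: "0 \<le> PQ x y w" for x y w unfolding PQ_def by simp
  have PQF: "PQ x y w \<le> pmf (F x y) w" for x y w unfolding PQ_def by (simp add: mult_left_le pmf_le_1)
  have PQG: "PQ x y w \<le> pmf (G w y) x" for x y w unfolding PQ_def by (simp add: mult_left_le_one_le pmf_le_1)
  have aY0: "0 \<le> aY k x y" for k x y unfolding aY_def by (intro sum_nonneg PQ0)
  have aY1: "aY k x y \<le> 1" for k x y
  proof -
    have "aY k x y \<le> (\<Sum>w\<in>W k. pmf (F x y) w)" unfolding aY_def by (intro sum_mono PQF)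
    also have "\<dots> \<le> 1" by (rule sum_pmf_le1[OF finW])
    finally show ?thesis .
  qed
  have q_split: "q x y = ennreal (aY k x y) + D k x y" for k x y
  proof -
    have "q x y = (\<integral>\<^sup>+w. ennreal (pmf (G w y) x) \<partial>measure_pmf (F x y))"
      unfolding q_def by (rule ennreal_pmf_bind)
    also have "\<dots> = (\<integral>\<^sup>+w. ennreal (PQ x y w) \<partial>count_space UNIV)"
      unfolding nn_integral_measure_pmf PQ_def by (simp add: ennreal_mult)
    also have "\<dots> = (\<integral>\<^sup>+w. indicator (W k) w * ennreal (PQ x y w) + indicator (- W k) w * ennreal (PQ x y w) \<partial>count_space UNIV)"
      by (intro nn_integral_cong) (simp add: indicator_def)
    also have "\<dots> = (\<integral>\<^sup>+w. indicator (W k) w * ennreal (PQ x y w) \<partial>count_space UNIV) + D k x y"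
      unfolding D_def by (rule nn_integral_add) simp_all
    also have "(\<integral>\<^sup>+w. indicator (W k) w * ennreal (PQ x y w) \<partial>count_space UNIV) = (\<integral>\<^sup>+w. ennreal (PQ x y w) \<partial>count_space (W k))"
      by (subst nn_integral_count_space_indicator) (auto simp: mult.commute)
    also have "\<dots> = (\<Sum>w\<in>W k. ennreal (PQ x y w))" by (rule nn_integral_count_space_finite[OF finW])
    also have "\<dots> = ennreal (aY k x y)" unfolding aY_def using PQ0 by simp
    finally show ?thesis .
  qed
  have q_fin: "q x y \<le> 1" for x y unfolding q_def by (simp add: pmf_le_1)
  have err: "ennreal (e x y) + q x y = 1" for x y
  proof -
    let ?p = "bind_pmf (F x y) (\<lambda>w. G w y)"
    have "e x y = 1 - pmf ?p x"
      unfolding e_def using measure_pmf.prob_compl[of "{x}" ?p] by (simp add: measure_pmf_single)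
    then show ?thesis unfolding q_def using pmf_le_1[of ?p x] by (simp add: ennreal_plus[symmetric] del: ennreal_plus)
  qed
  have len_ge: "(\<Sum>k. D k x y) \<le> (\<integral>\<^sup>+w. ennreal (real (length w)) \<partial>measure_pmf (F x y))" for x y
  proof -
    have "(\<Sum>k. D k x y) = (\<integral>\<^sup>+w. (\<Sum>k. indicator (- W k) w * ennreal (PQ x y w)) \<partial>count_space UNIV)"
      unfolding D_def by (rule nn_integral_suminf[symmetric]) simp
    also have "\<dots> \<le> (\<integral>\<^sup>+w. ennreal (pmf (F x y) w) * ennreal (real (length w)) \<partial>count_space UNIV)"
    proof (intro nn_integral_mono)
      fix w :: "bool list"
      have "(\<Sum>k. indicator (- W k) w * ennreal (PQ x y w)) = (\<Sum>k. indicator (- W k) w) * ennreal (PQ x y w)"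
        by simp
      also have "(\<Sum>k. indicator (- W k) w :: ennreal) = (\<Sum>k<length w. indicator (- W k) w)"
        by (rule suminf_finite) (auto simp: W_def indicator_def)
      also have "\<dots> = (\<Sum>k<length w. 1)" by (intro sum.cong) (auto simp: W_def indicator_def)
      also have "\<dots> = ennreal (real (length w))" by (simp add: ennreal_of_nat_eq_real_of_nat)
      also have "ennreal (real (length w)) * ennreal (PQ x y w) \<le> ennreal (pmf (F x y) w) * ennreal (real (length w))"
        by (subst mult.commute) (intro mult_right_mono ennreal_leI PQF, simp)
      finally show "(\<Sum>k. indicator (- W k) w * ennreal (PQ x y w)) \<le> ennreal (pmf (F x y) w) * ennreal (real (length w))" .
    qed
    also have "\<dots> = (\<integral>\<^sup>+w. ennreal (real (length w)) \<partial>measure_pmf (F x y))"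
      by (rule nn_integral_measure_pmf[symmetric])
    finally show ?thesis .
  qed
  have aYm: "aY k x \<in> borel_measurable N" for k x
    unfolding aY_def PQ_def using Fm Gm by measurable
  have aF: "a k x \<in> borel_measurable Fa" for k x
  proof (cases "x = 0")
    case True then show ?thesis unfolding a_def by simp
  next
    case False then show ?thesis unfolding a_def using Y_Fa[OF aYm[of k x]] by simp
  qed
  have a0: "0 \<le> a k x \<omega>" for k x \<omega> unfolding a_def using aY0 by simp
  have a1: "a k x \<omega> \<le> 1" for k x \<omega> unfolding a_def using aY1 by simp
  have az: "a k 0 \<omega> = 0" for k \<omega> unfolding a_def by simp
  have a_sum: "(\<Sum>x\<in>S. a k x \<omega>) \<le> real (2^(k+1) - 1)" if fS: "finite S" for k \<omega> S
  proof -
    have "(\<Sum>x\<in>S. a k x \<omega>) \<le> (\<Sum>x\<in>S. \<Sum>w\<in>W k. pmf (G w (Y \<omega>)) x)"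
    proof (intro sum_mono)
      fix x
      have "aY k x (Y \<omega>) \<le> (\<Sum>w\<in>W k. pmf (G w (Y \<omega>)) x)" unfolding aY_def by (intro sum_mono PQG)
      then show "a k x \<omega> \<le> (\<Sum>w\<in>W k. pmf (G w (Y \<omega>)) x)" unfolding a_def by (auto intro: sum_nonneg)
    qed
    also have "\<dots> = (\<Sum>w\<in>W k. \<Sum>x\<in>S. pmf (G w (Y \<omega>)) x)" by (rule sum.swap)
    also have "\<dots> \<le> (\<Sum>w\<in>W k. 1)" by (intro sum_mono sum_pmf_le1 fS)
    also have "\<dots> = real (card (W k))" by simp
    also have "card (W k) = 2^(k+1) - 1" unfolding W_def by (rule card_W)
    finally show ?thesis .
  qed
  have n1: "(1::nat) \<le> 2^(k+1) - 1" for k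
  proof -
    have "(2::nat) \<le> 2^(k+1)" by simp
    then show ?thesis by linarith
  qed
  have aX_eq: "a k (X \<omega>) \<omega> = aY k (X \<omega>) (Y \<omega>)" if "\<omega> \<in> space M" for k \<omega>
    using X1 that unfolding a_def by auto
  have Dm: "D k x \<in> borel_measurable N" for k x
    unfolding D_def by (rule meas_cs) (use Fm Gm in \<open>unfold PQ_def, measurable\<close>)
  have mD: "(\<lambda>\<omega>. D k (X \<omega>) (Y \<omega>)) \<in> borel_measurable M" for k by (rule XY_meas[OF Dm])
  have maY: "(\<lambda>\<omega>. ennreal (aY k (X \<omega>) (Y \<omega>))) \<in> borel_measurable M" for k
    by (rule XY_meas) (use aYm in measurable)
  have mq: "(\<lambda>\<omega>. q (X \<omega>) (Y \<omega>)) \<in> borel_measurable M"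
    unfolding q_split[of _ _ 0] using maY[of 0] mD[of 0] by measurable
  have e_q: "e x y = 1 - enn2real (q x y)" for x y
    unfolding e_def q_def using measure_pmf.prob_compl[of "{x}" "bind_pmf (F x y) (\<lambda>w. G w y)"]
    by (simp add: measure_pmf_single)
  have me: "(\<lambda>\<omega>. ennreal (e (X \<omega>) (Y \<omega>))) \<in> borel_measurable M"
    unfolding e_q using mq by measurable
  have I1: "(\<integral>\<^sup>+\<omega>. ennreal (e (X \<omega>) (Y \<omega>)) \<partial>M) + (\<integral>\<^sup>+\<omega>. q (X \<omega>) (Y \<omega>) \<partial>M) = 1"
  proof -
    have "(\<integral>\<^sup>+\<omega>. ennreal (e (X \<omega>) (Y \<omega>)) \<partial>M) + (\<integral>\<^sup>+\<omega>. q (X \<omega>) (Y \<omega>) \<partial>M) = (\<integral>\<^sup>+\<omega>. ennreal (e (X \<omega>) (Y \<omega>)) + q (X \<omega>) (Y \<omega>) \<partial>M)"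
      by (rule nn_integral_add[symmetric, OF me mq])
    also have "\<dots> = (\<integral>\<^sup>+\<omega>. 1 \<partial>M)" by (simp only: err)
    also have "\<dots> = 1" by (simp add: emeasure_space_1)
    finally show ?thesis .
  qed
  have I4: "(\<integral>\<^sup>+\<omega>. ennreal (e (X \<omega>) (Y \<omega>)) \<partial>M) \<le> ennreal eps" using Eb unfolding e_def .
  have Dk: "ennreal (prob {\<omega>\<in>space M. k < zn \<omega>} - eps) \<le> (\<integral>\<^sup>+\<omega>. D k (X \<omega>) (Y \<omega>) \<partial>M)" for k
  proof -
    define pk where "pk = prob {\<omega>\<in>space M. zn \<omega> \<le> k}"
    have I2: "(\<integral>\<^sup>+\<omega>. q (X \<omega>) (Y \<omega>) \<partial>M) = (\<integral>\<^sup>+\<omega>. ennreal (aY k (X \<omega>) (Y \<omega>)) \<partial>M) + (\<integral>\<^sup>+\<omega>. D k (X \<omega>) (Y \<omega>) \<partial>M)"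
      unfolding q_split[of _ _ k] by (rule nn_integral_add[OF maY mD])
    have "(\<integral>\<^sup>+\<omega>. ennreal (aY k (X \<omega>) (Y \<omega>)) \<partial>M) = (\<integral>\<^sup>+\<omega>. ennreal (a k (X \<omega>) \<omega>) \<partial>M)"
      by (intro nn_integral_cong) (simp add: aX_eq)
    also have "\<dots> \<le> emeasure M {\<omega>\<in>space M. rank \<omega> \<le> 2^(k+1) - 1}"
      by (rule converse_k[OF aF a0 a1 az a_sum n1])
    also have "{\<omega>\<in>space M. rank \<omega> \<le> 2^(k+1) - 1} = {\<omega>\<in>space M. zn \<omega> \<le> k}"
      using zn_le_iff by auto
    also have "emeasure M {\<omega>\<in>space M. zn \<omega> \<le> k} = ennreal pk" unfolding pk_def by (rule emeasure_eq_measure)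
    finally have I3: "(\<integral>\<^sup>+\<omega>. ennreal (aY k (X \<omega>) (Y \<omega>)) \<partial>M) \<le> ennreal pk" .
    have pc: "prob {\<omega>\<in>space M. k < zn \<omega>} = 1 - pk"
    proof -
      have "{\<omega>\<in>space M. k < zn \<omega>} = space M - {\<omega>\<in>space M. zn \<omega> \<le> k}" by auto
      then show ?thesis unfolding pk_def using prob_compl[OF zn_sets[of "\<lambda>n. n \<le> k"]] by simp
    qed
    have tot: "1 \<le> ennreal eps + ennreal pk + (\<integral>\<^sup>+\<omega>. D k (X \<omega>) (Y \<omega>) \<partial>M)"
    proof -
      have "1 = (\<integral>\<^sup>+\<omega>. ennreal (e (X \<omega>) (Y \<omega>)) \<partial>M) + (\<integral>\<^sup>+\<omega>. ennreal (aY k (X \<omega>) (Y \<omega>)) \<partial>M) + (\<integral>\<^sup>+\<omega>. D k (X \<omega>) (Y \<omega>) \<partial>M)"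
        using I1 I2 by (simp add: add.assoc)
      also have "\<dots> \<le> ennreal eps + ennreal pk + (\<integral>\<^sup>+\<omega>. D k (X \<omega>) (Y \<omega>) \<partial>M)"
        by (intro add_mono I4 I3 order_refl)
      finally show ?thesis .
    qed
    show ?thesis
    proof (cases "(\<integral>\<^sup>+\<omega>. D k (X \<omega>) (Y \<omega>) \<partial>M)")
      case (real d)
      have pk0: "0 \<le> pk" unfolding pk_def by simp
      have "ennreal 1 \<le> ennreal (eps + pk + d)" using tot real eps0 pk0 by (simp add: ennreal_plus[symmetric] del: ennreal_plus)
      then have "1 \<le> eps + pk + d" using eps0 pk0 real by (subst (asm) ennreal_le_iff) auto
      then have "prob {\<omega>\<in>space M. k < zn \<omega>} - eps \<le> d" using pc by simp
      then show ?thesis using real by (simp add: ennreal_leI)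
    next
      case top then show ?thesis by simp
    qed
  qed
  have "LB = (\<Sum>k. ennreal (prob {\<omega>\<in>space M. k < zn \<omega>} - eps))" unfolding LB_def ..
  also have "\<dots> \<le> (\<Sum>k. \<integral>\<^sup>+\<omega>. D k (X \<omega>) (Y \<omega>) \<partial>M)"
    by (intro suminf_le summableI Dk)
  also have "\<dots> = (\<integral>\<^sup>+\<omega>. (\<Sum>k. D k (X \<omega>) (Y \<omega>)) \<partial>M)"
    by (rule nn_integral_suminf[symmetric, OF mD])
  also have "\<dots> \<le> (\<integral>\<^sup>+\<omega>. (\<integral>\<^sup>+w. ennreal (real (length w)) \<partial>measure_pmf (F (X \<omega>) (Y \<omega>))) \<partial>M)"
    by (intro nn_integral_mono len_ge)
  also have "\<dots> \<le> L" by (rule Lb)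
  finally show ?thesis .
qed

end

context L5 begin

lemma doob:
  obtains f :: "nat \<Rightarrow> 'b \<Rightarrow> nat" where "\<And>i. f i \<in> measurable N (count_space UNIV)"
    "\<And>i \<omega>. \<omega> \<in> space M \<Longrightarrow> f i (Y \<omega>) = \<sigma> \<omega> i"
proof -
  have YS: "Y \<in> space M \<rightarrow> space N" using Ym by (auto simp: measurable_def)
  have "\<forall>i k. \<exists>A. A \<in> sets N \<and> {\<omega>\<in>space M. \<sigma> \<omega> i = k} = Y -` A \<inter> space M"
  proof (intro allI)
    fix i k
    have "(\<lambda>\<omega>. \<sigma> \<omega> i) -` {k} \<inter> space Fa \<in> sets Fa"
      by (rule measurable_sets[OF \<sigma>mF]) simp
    then have "{\<omega>\<in>space M. \<sigma> \<omega> i = k} \<in> sets Fa" by (simp add: vimage_def Int_def conj_commute)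
    then show "\<exists>A. A \<in> sets N \<and> {\<omega>\<in>space M. \<sigma> \<omega> i = k} = Y -` A \<inter> space M"
      unfolding sets_vimage_algebra2[OF YS] by blast
  qed
  then obtain A where A: "\<And>i k. A i k \<in> sets N" "\<And>i k. {\<omega>\<in>space M. \<sigma> \<omega> i = k} = Y -` A i k \<inter> space M"
    by metis
  define f where "f i y = (LEAST k. y \<in> A i k)" for i y
  show ?thesis
  proof
    fix i
    show "f i \<in> measurable N (count_space UNIV)"
      unfolding f_def
    proof (rule measurable_Least)
      fix k show "(\<lambda>y. y \<in> A i k) \<in> measurable N (count_space UNIV)"
        by (rule pred_sets2[where f="\<lambda>x. x" and N=N, OF A(1)]) simp
    qed
  next
    fix i \<omega> assume w: "\<omega> \<in> space M"
    have iff: "Y \<omega> \<in> A i k \<longleftrightarrow> \<sigma> \<omega> i = k" for k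
      using A(2)[of i k] w by blast
    show "f i (Y \<omega>) = \<sigma> \<omega> i" unfolding f_def iff by (rule Least_equality) simp_all
  qed
qed

end

context L5c begin

definition F0 :: "nat \<Rightarrow> bool list pmf" where
  "F0 r = (if ereal (real (length (enc r))) < \<eta> then return_pmf (enc r)
           else if ereal (real (length (enc r))) = \<eta> then map_pmf (\<lambda>b. if b then enc r else []) (bernoulli_pmf (1 - \<beta>))
           else return_pmf [])"

lemma achieve:
  obtains Fc Gc where "\<And>L. cutoff_exp M Zr \<eta> \<beta> \<le> L \<Longrightarrow> avg_code M X Y N L eps Fc Gc"
proof -
  obtain f where fm: "\<And>i. f i \<in> measurable N (count_space UNIV)"
    and fY: "\<And>i \<omega>. \<omega> \<in> space M \<Longrightarrow> f i (Y \<omega>) = \<sigma> \<omega> i" using doob by blast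
  define rk where "rk x y = (LEAST i. 1 \<le> i \<and> f i y = x)" for x y
  define Fc where "Fc x y = F0 (rk x y)" for x y
  define dd where "dd v = (if 1 \<le> v then v else 1::nat)" for v
  define Gc where "Gc w y = return_pmf (dd (f (dec w) y))" for w y
  have rkm: "rk x \<in> measurable N (count_space UNIV)" for x
    unfolding rk_def
  proof (rule measurable_Least)
    fix i
    have e: "(\<lambda>y. 1 \<le> i \<and> f i y = x) = (\<lambda>y. f i y \<in> (if 1 \<le> i then {x} else {}))" by auto
    show "(\<lambda>y. 1 \<le> i \<and> f i y = x) \<in> measurable N (count_space UNIV)"
      unfolding e by (rule pred_sets2[OF _ fm]) simp
  qed
  have rk_rank: "rk (X \<omega>) (Y \<omega>) = rank \<omega>" if w: "\<omega> \<in> space M" for \<omega>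
    unfolding rk_def rank_Least[OF w] using fY[OF w] by simp
  have Gc_ok: "Gc (enc (rank \<omega>)) (Y \<omega>) = return_pmf (X \<omega>)" if w: "\<omega> \<in> space M" for \<omega>
  proof -
    have "f (dec (enc (rank \<omega>))) (Y \<omega>) = X \<omega>"
      using dec_enc[OF rank_props(1)[OF w]] fY[OF w] rank_props(2)[OF w] by simp
    then show ?thesis unfolding Gc_def dd_def using X1 w by simp
  qed
  have len: "(\<integral>\<^sup>+w. ennreal (real (length w)) \<partial>measure_pmf (Fc (X \<omega>) (Y \<omega>))) = ennreal (real (zn \<omega>) * cw \<omega>)"
    if w: "\<omega> \<in> space M" for \<omega>
  proof -
    define r where "r = rank \<omega>"
    have z: "zn \<omega> = length (enc r)" unfolding zn_def r_def ..
    have Fc_eq: "Fc (X \<omega>) (Y \<omega>) = F0 r" unfolding Fc_def r_def rk_rank[OF w] ..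
    have p0: "0 \<le> 1 - \<beta>" "1 - \<beta> \<le> 1" using beta0 beta1 by auto
    show ?thesis
    proof (cases "ereal (real (length (enc r))) < \<eta>")
      case True
      then show ?thesis unfolding Fc_eq F0_def cw_def z by simp
    next
      case False
      show ?thesis
      proof (cases "ereal (real (length (enc r))) = \<eta>")
        case True
        have "(\<integral>\<^sup>+w. ennreal (real (length w)) \<partial>measure_pmf (F0 r)) =
            (\<integral>\<^sup>+b. ennreal (real (length (if b then enc r else []))) \<partial>measure_pmf (bernoulli_pmf (1 - \<beta>)))"
          unfolding F0_def using False True by simp
        also have "\<dots> = ennreal (real (length (enc r))) * ennreal (1 - \<beta>)"
          by (subst nn_integral_bernoulli_pmf[OF p0]) simp_all
        also have "\<dots> = ennreal (real (length (enc r)) * (1 - \<beta>))" by (rule ennreal_mult'[symmetric]) simp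
        finally show ?thesis unfolding Fc_eq cw_def z using False True by simp
      next
        case F2: False
        then show ?thesis unfolding Fc_eq F0_def cw_def z using False by simp
      qed
    qed
  qed
  have errb: "measure_pmf.prob (bind_pmf (Fc (X \<omega>) (Y \<omega>)) (\<lambda>w. Gc w (Y \<omega>))) (UNIV - {X \<omega>}) \<le> gw \<omega>"
    if w: "\<omega> \<in> space M" for \<omega>
  proof -
    define r where "r = rank \<omega>"
    have z: "zn \<omega> = length (enc r)" unfolding zn_def r_def ..
    have Fc_eq: "Fc (X \<omega>) (Y \<omega>) = F0 r" unfolding Fc_def r_def rk_rank[OF w] ..
    have G_eq: "Gc (enc r) (Y \<omega>) = return_pmf (X \<omega>)" unfolding r_def by (rule Gc_ok[OF w])
    let ?p = "bind_pmf (F0 r) (\<lambda>w. Gc w (Y \<omega>))"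
    have pc: "measure_pmf.prob ?p (UNIV - {X \<omega>}) = 1 - pmf ?p (X \<omega>)"
      using measure_pmf.prob_compl[of "{X \<omega>}" ?p] by (simp add: measure_pmf_single)
    have g0: "0 \<le> gw \<omega>" unfolding gw_def using beta0 by simp
    show ?thesis
    proof (cases "ereal (real (length (enc r))) < \<eta>")
      case True
      then have "?p = return_pmf (X \<omega>)" unfolding F0_def by (simp add: bind_return_pmf G_eq)
      then show ?thesis unfolding Fc_eq pc using g0 by simp
    next
      case False
      show ?thesis
      proof (cases "ereal (real (length (enc r))) = \<eta>")
        case True
        have p0: "0 \<le> 1 - \<beta>" "1 - \<beta> \<le> 1" using beta0 beta1 by auto
        have gb: "gw \<omega> = \<beta>" unfolding gw_def Sgt_def Seq_def using True w z by simp
        have "?p = bind_pmf (bernoulli_pmf (1 - \<beta>)) (\<lambda>b. Gc (if b then enc r else []) (Y \<omega>))"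
          unfolding F0_def using False True by (simp add: bind_map_pmf)
        then have "pmf ?p (X \<omega>) = (\<integral>b. pmf (Gc (if b then enc r else []) (Y \<omega>)) (X \<omega>) \<partial>measure_pmf (bernoulli_pmf (1 - \<beta>)))"
          by (simp add: pmf_bind)
        also have "\<dots> = pmf (Gc (enc r) (Y \<omega>)) (X \<omega>) * (1 - \<beta>) + pmf (Gc [] (Y \<omega>)) (X \<omega>) * (1 - (1 - \<beta>))"
          using integral_bernoulli_pmf[OF p0, of "\<lambda>b. pmf (Gc (if b then enc r else []) (Y \<omega>)) (X \<omega>)"] by simp
        also have "\<dots> \<ge> 1 - \<beta>" unfolding G_eq using beta0 by simp
        finally show ?thesis unfolding Fc_eq pc gb by simp
      next
        case F2: False
        have "\<omega> \<in> Sgt" unfolding Sgt_def using False F2 w z by (simp add: not_less)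
        then have "gw \<omega> \<ge> 1" unfolding gw_def using beta0 by simp
        moreover have "measure_pmf.prob ?p (UNIV - {X \<omega>}) \<le> 1" by (rule measure_pmf.prob_le_1)
        ultimately show ?thesis unfolding Fc_eq by linarith
      qed
    qed
  qed
  have Ecode: "(\<integral>\<^sup>+\<omega>. ennreal (measure_pmf.prob (bind_pmf (Fc (X \<omega>) (Y \<omega>)) (\<lambda>w. Gc w (Y \<omega>))) (UNIV - {X \<omega>})) \<partial>M) \<le> ennreal eps"
  proof -
    have "(\<integral>\<^sup>+\<omega>. ennreal (measure_pmf.prob (bind_pmf (Fc (X \<omega>) (Y \<omega>)) (\<lambda>w. Gc w (Y \<omega>))) (UNIV - {X \<omega>})) \<partial>M)
        \<le> (\<integral>\<^sup>+\<omega>. ennreal (gw \<omega>) \<partial>M)"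
      by (intro nn_integral_mono ennreal_leI errb)
    also have "\<dots> = ennreal (\<integral>\<omega>. gw \<omega> \<partial>M)"
      by (rule nn_integral_eq_integral[OF gw_int(1)]) (simp add: gw_def beta0)
    also have "\<dots> = ennreal eps" using gw_int(2) by simp
    finally show ?thesis .
  qed
  have Lcode: "(\<integral>\<^sup>+\<omega>. (\<integral>\<^sup>+w. ennreal (real (length w)) \<partial>measure_pmf (Fc (X \<omega>) (Y \<omega>))) \<partial>M) = cutoff_exp M Zr \<eta> \<beta>"
    unfolding cutoff_exp_eq by (intro nn_integral_cong len)
  show ?thesis
  proof (rule that)
    fix L assume "cutoff_exp M Zr \<eta> \<beta> \<le> L"
    show "avg_code M X Y N L eps Fc Gc"
      unfolding avg_code_def
    proof (intro conjI allI)
      fix x w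
      show "(\<lambda>y. pmf (Fc x y) w) \<in> borel_measurable N"
        unfolding Fc_def by (rule measurable_compose[OF rkm]) simp
    next
      fix w x
      show "(\<lambda>y. pmf (Gc w y) x) \<in> borel_measurable N"
        unfolding Gc_def by (rule measurable_compose[OF fm]) simp
    next
      fix w y show "set_pmf (Gc w y) \<subseteq> {1..}" unfolding Gc_def dd_def by simp
    next
      show "(\<integral>\<^sup>+\<omega>. (\<integral>\<^sup>+w. ennreal (real (length w)) \<partial>measure_pmf (Fc (X \<omega>) (Y \<omega>))) \<partial>M) \<le> L"
        unfolding Lcode by fact
    qed (rule Ecode)
  qed
qed

end


theorem lemma5:
  fixes M :: "'a measure" and N :: "'b measure"
    and X :: "'a \<Rightarrow> nat" and Y :: "'a \<Rightarrow> 'b"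
    and \<sigma> :: "'a \<Rightarrow> nat \<Rightarrow> nat"
    and eps :: real and \<eta> :: ereal and \<beta> :: real
  assumes "prob_space M"
    and "X \<in> measurable M (count_space UNIV)"
    and "Y \<in> measurable M N"
    and "\<forall>\<omega>\<in>space M. X \<omega> \<ge> 1"
    and "0 \<le> eps" and "eps \<le> 1"
    and "\<forall>\<omega>\<in>space M. bij_betw (\<sigma> \<omega>) {1..} {1..}"
    and "\<forall>i. (\<lambda>\<omega>. \<sigma> \<omega> i) \<in> measurable (vimage_algebra (space M) Y N) (count_space UNIV)"
    and "AE \<omega> in M. \<forall>i\<ge>1. cond_pmf M X Y N (\<sigma> \<omega> i) \<omega> \<ge> cond_pmf M X Y N (\<sigma> \<omega> (Suc i)) \<omega>"
    and "cutoff_params M (\<lambda>\<omega>. real_of_int \<lfloor>log 2 (real (inv_into {1..} (\<sigma> \<omega>) (X \<omega>)))\<rfloor>) eps \<eta> \<beta>"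
  shows "L_avg_star M X Y N eps =
    cutoff_exp M (\<lambda>\<omega>. real_of_int \<lfloor>log 2 (real (inv_into {1..} (\<sigma> \<omega>) (X \<omega>)))\<rfloor>) \<eta> \<beta>"
proof -
  interpret L5 M X Y N \<sigma>
    by (rule L5.intro[OF assms(1)], unfold_locales) (use assms in auto)
  have Zr_eq: "Zr = (\<lambda>\<omega>. real_of_int \<lfloor>log 2 (real (inv_into {1..} (\<sigma> \<omega>) (X \<omega>)))\<rfloor>)"
    by (rule ext) (simp add: Zr_def)
  interpret L5c M X Y N \<sigma> eps \<eta> \<beta>
    by unfold_locales (use assms in \<open>simp_all add: Zr_eq\<close>)
  have cut: "cutoff_exp M (\<lambda>\<omega>. real_of_int \<lfloor>log 2 (real (inv_into {1..} (\<sigma> \<omega>) (X \<omega>)))\<rfloor>) \<eta> \<beta> = LB"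
    unfolding Zr_eq[symmetric] cutoff_exp_eq int_zn_cw ..
  define S where "S = {ennreal L | L. L > 0 \<and> (\<exists>F G. avg_code M X Y N (ennreal L) eps F G)}"
  have "Inf S = LB"
  proof (rule antisym)
    obtain Fc Gc where code: "\<And>L. cutoff_exp M Zr \<eta> \<beta> \<le> L \<Longrightarrow> avg_code M X Y N L eps Fc Gc"
      using achieve by metis
    show "Inf S \<le> LB"
    proof (rule ennreal_le_epsilon)
      fix e :: real assume lt: "LB < top" and e: "0 < e"
      obtain l where l: "0 \<le> l" "LB = ennreal l" using lt by (cases LB) auto
      have "ennreal (l + e) \<in> S"
        unfolding S_def
      proof (intro CollectI exI conjI)
        show "0 < l + e" using l e by simp
        have "cutoff_exp M Zr \<eta> \<beta> \<le> ennreal (l + e)"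
          unfolding cutoff_exp_eq int_zn_cw l(2) using e by (intro ennreal_leI) simp
        then show "avg_code M X Y N (ennreal (l + e)) eps Fc Gc" by (rule code)
      qed simp
      then have "Inf S \<le> ennreal (l + e)" by (rule Inf_lower)
      also have "\<dots> = LB + ennreal e" using l e by (simp add: ennreal_plus)
      finally show "Inf S \<le> LB + ennreal e" .
    qed
    show "LB \<le> Inf S"
    proof (rule Inf_greatest)
      fix x assume "x \<in> S"
      then obtain L F G where "x = ennreal L" "avg_code M X Y N (ennreal L) eps F G"
        unfolding S_def by blast
      then show "LB \<le> x" using code_lower by simp
    qed
  qed
  then show ?thesis unfolding L_avg_star_def S_def[symmetric] cut .
qed


end
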